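(* In the standard LLP setup, suppose $K^\uparrow\neq\emptyset$. If $N_{mcf\bar c}$ is defined and $N\ge N_{mcf\bar c}+1$, then $L(G,\gamma^N_{optm})=\overline{K^\uparrow}$.
   Context: Standard LLP setup. $\Sigma=\Sigma_c\,\dot\cup\,\Sigma_{uc}$ is a finite alphabet partitioned into controllable and uncontrollable events. The plant $G$ has generated language $L(G)$ and marked language $L_m(G)$ with $L(G)=\overline{L_m(G)}$ ($\overline{M}$ = set of prefixes of strings in $M$). The legal language $K\subseteq L_m(G)$ satisfies $K=\overline{K}\cap L_m(G)$ ($K$ need not be prefix-closed). For a prefix-closed $L$, $M$ is controllable w.r.t. $L$ if $\overline{M}\Sigma_{uc}\cap L\subseteq\overline{M}$; $K^\uparrow$ is the supremal sublanguage of $K$ controllable w.r.t. $L(G)$. For a language $L$ and $s\in\Sigma^*$: $L/s=\{t: st\in L\}$; $L|_N=\{t\in L:|t|\le N\}$; $\Sigma_{L(G)}(s)=\{\sigma\in\Sigma: s\sigma\in L(G)\}$. $M^{\uparrow/s|_N}$ is the supremal sublanguage of $M$ controllable w.r.t. $L(G)/s|_N$. Optimistic attitude: $f^N_{optm}(s)=[K/s|_N\cup(\overline{K}/s|_N\setminus\overline{K}/s|_{N-1})]^{\uparrow/s|_N}$; control policy $\gamma^N_{optm}(s)=(\overline{f^N_{optm}(s)}\cap\Sigma)\cup(\Sigma_{uc}\cap\Sigma_{L(G)}(s))$. Closed-loop language $L(G,\gamma)$: $\epsilon\in L(G,\gamma)$, and $s\sigma\in L(G,\gamma)$ iff $s\in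 L(G,\gamma)$, $s\sigma\in L(G)$, $\sigma\in\gamma(s)$. Define $L_c(G)=\{s\in L(G): s\sigma\notin L(G)\ \forall\sigma\in\Sigma_{uc}\}$, $K_{mc}=K\cap L_c(G)$, and $K_{f\bar c}=\{s\in\overline{K}: \exists\sigma\in\Sigma_{uc},\ s\sigma\in L(G)\setminus\overline{K}\}$. Then $N_{mcf\bar c}=\max\{|t|: \exists s\in K_{mc}\cup\{\epsilon\},\ st\in K_{f\bar c}\text{ and } sv\notin K_{f\bar c}\cup K_{mc}\text{ for every nonempty proper prefix } v \text{ of } t\}$ if this maximum exists; otherwise undefined. *)

theory Defs
  imports Main
begin

text \<open>Strings over the alphabet are lists over a finite type 'a (the alphabet is UNIV);
  languages are sets of lists.\<close>

definition pre :: "'a list set \<Rightarrow> 'a list set" where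
  "pre M = {s. \<exists>t. s @ t \<in> M}"

definition controllable :: "'a set \<Rightarrow> 'a list set \<Rightarrow> 'a list set \<Rightarrow> bool" where
  "controllable Suc' M L \<longleftrightarrow> {s @ [\<sigma>] | s \<sigma>. s \<in> pre M \<and> \<sigma> \<in> Suc'} \<inter> L \<subseteq> pre M"

definition supC :: "'a set \<Rightarrow> 'a list set \<Rightarrow> 'a list set \<Rightarrow> 'a list set" where
  "supC Suc' M L = \<Union>{M'. M' \<subseteq> M \<and> controllable Suc' M' L}"

definition quot :: "'a list set \<Rightarrow> 'a list \<Rightarrow> 'a list set" where
  "quot L s = {t. s @ t \<in> L}"

definition trunc :: "'a list set \<Rightarrow> nat \<Rightarrow> 'a list set" where
  "trunc L N = {t \<in> L. length t \<le> N}"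

definition f_optm :: "'a set \<Rightarrow> 'a list set \<Rightarrow> 'a list set \<Rightarrow> nat \<Rightarrow> 'a list \<Rightarrow> 'a list set" where
  "f_optm Suc' LG K N s =
     supC Suc' (trunc (quot K s) N \<union>
                (trunc (quot (pre K) s) N - trunc (quot (pre K) s) (N - 1)))
          (trunc (quot LG s) N)"

definition gamma_optm :: "'a set \<Rightarrow> 'a list set \<Rightarrow> 'a list set \<Rightarrow> nat \<Rightarrow> 'a list \<Rightarrow> 'a set" where
  "gamma_optm Suc' LG K N s =
     {\<sigma>. [\<sigma>] \<in> pre (f_optm Suc' LG K N s)} \<union> (Suc' \<inter> {\<sigma>. s @ [\<sigma>] \<in> LG})"

inductive_set closed_loop :: "'a list set \<Rightarrow> ('a list \<Rightarrow> 'a set) \<Rightarrow> 'a list set"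
  for LG :: "'a list set" and \<gamma> :: "'a list \<Rightarrow> 'a set" where
  eps: "[] \<in> closed_loop LG \<gamma>"
| step: "s \<in> closed_loop LG \<gamma> \<Longrightarrow> s @ [\<sigma>] \<in> LG \<Longrightarrow> \<sigma> \<in> \<gamma> s \<Longrightarrow> s @ [\<sigma>] \<in> closed_loop LG \<gamma>"

definition Lc :: "'a set \<Rightarrow> 'a list set \<Rightarrow> 'a list set" where
  "Lc Suc' LG = {s \<in> LG. \<forall>\<sigma>\<in>Suc'. s @ [\<sigma>] \<notin> LG}"

definition K_mc :: "'a set \<Rightarrow> 'a list set \<Rightarrow> 'a list set \<Rightarrow> 'a list set" where
  "K_mc Suc' LG K = K \<inter> Lc Suc' LG"

definition K_fc :: "'a set \<Rightarrow> 'a list set \<Rightarrow> 'a list set \<Rightarrow> 'a list set" where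
  "K_fc Suc' LG K = {s \<in> pre K. \<exists>\<sigma>\<in>Suc'. s @ [\<sigma>] \<in> LG - pre K}"

definition Nmcf_set :: "'a set \<Rightarrow> 'a list set \<Rightarrow> 'a list set \<Rightarrow> nat set" where
  "Nmcf_set Suc' LG K =
     {length t | s t. s \<in> K_mc Suc' LG K \<union> {[]} \<and> s @ t \<in> K_fc Suc' LG K \<and>
        (\<forall>v w. v \<noteq> [] \<and> w \<noteq> [] \<and> t = v @ w \<longrightarrow>
               s @ v \<notin> K_fc Suc' LG K \<union> K_mc Suc' LG K)}"

definition Nmcf :: "'a set \<Rightarrow> 'a list set \<Rightarrow> 'a list set \<Rightarrow> nat option" where
  "Nmcf Suc' LG K =
     (if Nmcf_set Suc' LG K \<noteq> {} \<and> finite (Nmcf_set Suc' LG K)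
      then Some (Max (Nmcf_set Suc' LG K)) else None)"

end

theory Submission
  imports Defs
begin

lemma pre_sub: "A \<subseteq> pre A"
  unfolding pre_def by (auto intro: exI[of _ "[]"])

lemma pre_mono: "A \<subseteq> B \<Longrightarrow> pre A \<subseteq> pre B"
  unfolding pre_def by blast

lemma pre_app: "x @ y \<in> pre A \<Longrightarrow> x \<in> pre A"
proof -
  assume "x @ y \<in> pre A"
  then obtain t where "x @ y @ t \<in> A" unfolding pre_def by auto
  then show "x \<in> pre A" unfolding pre_def by blast
qed

lemma ctrlD: "controllable S M L \<Longrightarrow> x \<in> pre M \<Longrightarrow> u \<in> S \<Longrightarrow> x @ [u] \<in> L \<Longrightarrow> x @ [u] \<in> pre M"
  unfolding controllable_def by blast

lemma ctrlI: "(\<And>x u. x \<in> pre M \<Longrightarrow> u \<in> S \<Longrightarrow> x @ [u] \<in> L \<Longrightarrow> x @ [u] \<in> pre M) \<Longrightarrow> controllable S M L"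
  unfolding controllable_def by blast

lemma supC_sub: "supC S M L \<subseteq> M" unfolding supC_def by blast

lemma supC_max: "M' \<subseteq> M \<Longrightarrow> controllable S M' L \<Longrightarrow> M' \<subseteq> supC S M L"
  unfolding supC_def by blast

lemma supC_ctrl: "controllable S (supC S M L) L"
proof (rule ctrlI)
  fix x u assume a: "x \<in> pre (supC S M L)" "u \<in> S" "x @ [u] \<in> L"
  then obtain y where "x @ y \<in> supC S M L" unfolding pre_def by blast
  then obtain M' where M': "M' \<subseteq> M" "controllable S M' L" "x @ y \<in> M'" unfolding supC_def by blast
  then have "x \<in> pre M'" unfolding pre_def by blast
  then have "x @ [u] \<in> pre M'" using ctrlD[OF M'(2)] a by blast
  moreover have "pre M' \<subseteq> pre (supC S M L)" using supC_max[OF M'(1,2)] pre_mono by blast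
  ultimately show "x @ [u] \<in> pre (supC S M L)" by blast
qed

lemma region:
  assumes pc: "\<And>x y. x @ y \<in> Q \<Longrightarrow> x \<in> Q"
    and uc: "\<And>x u. x \<in> Q \<Longrightarrow> u \<in> S \<Longrightarrow> x @ [u] \<in> L \<Longrightarrow> x @ [u] \<in> Q"
    and ex: "Q \<subseteq> pre (Q \<inter> K)"
  shows "Q \<subseteq> pre (supC S K L)"
proof -
  have pQ: "pre (Q \<inter> K) \<subseteq> Q" unfolding pre_def using pc by blast
  have "controllable S (Q \<inter> K) L"
    by (rule ctrlI) (use pQ ex uc in blast)
  then have "Q \<inter> K \<subseteq> supC S K L" by (intro supC_max) auto
  then show ?thesis using ex pre_mono by blast
qed

lemma step_in:
  assumes N1: "N \<ge> 1"
    and sR: "s @ [\<sigma>] \<in> pre (supC Suc' K LG)"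
  shows "[\<sigma>] \<in> pre (f_optm Suc' LG K N s)"
proof -
  define R where "R = pre (supC Suc' K LG)"
  define M where "M = {t. s @ t \<in> R \<and> length t \<le> N \<and> (s @ t \<in> K \<or> length t = N)}"
  define T where "T = trunc (quot K s) N \<union> (trunc (quot (pre K) s) N - trunc (quot (pre K) s) (N - 1))"
  define W where "W = trunc (quot LG s) N"
  have RpK: "R \<subseteq> pre K" unfolding R_def by (rule pre_mono[OF supC_sub])
  have Rpc: "\<And>x y. x @ y \<in> R \<Longrightarrow> x \<in> R" unfolding R_def by (rule pre_app)
  have Rctrl: "\<And>x u. x \<in> R \<Longrightarrow> u \<in> Suc' \<Longrightarrow> x @ [u] \<in> LG \<Longrightarrow> x @ [u] \<in> R"
    unfolding R_def by (rule ctrlD[OF supC_ctrl])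
  have MT: "M \<subseteq> T"
  proof
    fix t assume "t \<in> M"
    then have t: "s @ t \<in> R" "length t \<le> N" "s @ t \<in> K \<or> length t = N" unfolding M_def by auto
    show "t \<in> T"
    proof (cases "s @ t \<in> K")
      case True
      then show ?thesis unfolding T_def trunc_def quot_def using t(2) by blast
    next
      case False
      then have "length t = N" using t(3) by blast
      moreover have "s @ t \<in> pre K" using t(1) RpK by blast
      ultimately show ?thesis unfolding T_def trunc_def quot_def using N1 by auto
    qed
  qed
  have preM: "\<And>t. s @ t \<in> R \<Longrightarrow> length t \<le> N \<Longrightarrow> t \<in> pre M"
  proof -
    fix t assume a: "s @ t \<in> R" "length t \<le> N"
    then obtain w where w: "s @ t @ w \<in> supC Suc' K LG" unfolding R_def pre_def by auto
    have wR: "s @ t @ w \<in> R" using w pre_sub R_def by blast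
    have wK: "s @ t @ w \<in> K" using w supC_sub by blast
    show "t \<in> pre M"
    proof (cases "length (t @ w) \<le> N")
      case True
      then have "t @ w \<in> M" unfolding M_def using wR wK by simp
      then show ?thesis unfolding pre_def by blast
    next
      case False
      define y where "y = take N (t @ w)"
      have "(s @ y) @ drop N (t @ w) \<in> R" using wR unfolding y_def
        by (metis append_assoc append_take_drop_id)
      then have "s @ y \<in> R" by (rule Rpc)
      moreover have "length y = N" using False y_def by simp
      ultimately have "y \<in> M" unfolding M_def by simp
      moreover have "y = t @ take (N - length t) w" unfolding y_def using a(2) by simp
      ultimately show ?thesis unfolding pre_def by blast
    qed
  qed
  have Mctrl: "controllable Suc' M W"
  proof (rule ctrlI)
    fix x u assume a: "x \<in> pre M" "u \<in> Suc'" "x @ [u] \<in> W"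
    then obtain y where "x @ y \<in> M" unfolding pre_def by blast
    then have "s @ x @ y \<in> R" unfolding M_def by simp
    then have "s @ x \<in> R" using Rpc[of "s @ x" y] by simp
    moreover have "s @ x @ [u] \<in> LG" "length (x @ [u]) \<le> N" using a(3) unfolding W_def trunc_def quot_def by auto
    ultimately have "s @ x @ [u] \<in> R" using Rctrl[of "s @ x" u] a(2) by simp
    then show "x @ [u] \<in> pre M" using preM \<open>length (x @ [u]) \<le> N\<close> by simp
  qed
  have "M \<subseteq> f_optm Suc' LG K N s" unfolding f_optm_def
    using supC_max[OF MT Mctrl] unfolding T_def W_def .
  moreover have "[\<sigma>] \<in> pre M" using preM[of "[\<sigma>]"] sR N1 R_def by simp
  ultimately show ?thesis using pre_mono by blast
qed


lemma step_good:
  fixes Suc' :: "'a set" and LG LmG K :: "'a list set" and N n :: nat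
  assumes plant: "LG = pre LmG"
    and K_sub: "K \<subseteq> LmG"
    and defined: "Nmcf Suc' LG K = Some n"
    and N_ge: "N \<ge> n + 1"
    and sR: "s \<in> pre (supC Suc' K LG)"
    and sig: "[\<sigma>] \<in> pre (f_optm Suc' LG K N s)"
  shows "s @ [\<sigma>] \<in> pre (supC Suc' K LG)"
proof -
  define R where "R = pre (supC Suc' K LG)"
  define P where "P = pre K"
  define F where "F = f_optm Suc' LG K N s"
  have sR': "s \<in> R" using sR R_def by simp
  have RP: "R \<subseteq> P" unfolding R_def P_def by (rule pre_mono[OF supC_sub])
  have PLG: "P \<subseteq> LG" unfolding P_def plant by (rule pre_mono[OF K_sub])
  have Rctrl: "\<And>x u. x \<in> R \<Longrightarrow> u \<in> Suc' \<Longrightarrow> x @ [u] \<in> LG \<Longrightarrow> x @ [u] \<in> R"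
    unfolding R_def by (rule ctrlD[OF supC_ctrl])
  have Rpc: "\<And>x y. x @ y \<in> R \<Longrightarrow> x \<in> R" unfolding R_def by (rule pre_app)
  have Ppc: "\<And>x y. x @ y \<in> P \<Longrightarrow> x \<in> P" unfolding P_def by (rule pre_app)
  have KP: "K \<subseteq> P" unfolding P_def by (rule pre_sub)
  have RKfc: "\<And>x. x \<in> R \<Longrightarrow> x \<notin> K_fc Suc' LG K"
  proof
    fix x assume a: "x \<in> R" "x \<in> K_fc Suc' LG K"
    then obtain u where u: "u \<in> Suc'" "x @ [u] \<in> LG" "x @ [u] \<notin> P"
      unfolding K_fc_def P_def by auto
    have "x @ [u] \<in> R" by (rule Rctrl[OF a(1) u(1) u(2)])
    then show False using RP u(3) by blast
  qed
  define T where "T = trunc (quot K s) N \<union> (trunc (quot (pre K) s) N - trunc (quot (pre K) s) (N - 1))"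
  define W where "W = trunc (quot LG s) N"
  have F_eq: "F = supC Suc' T W" unfolding F_def f_optm_def T_def W_def ..
  have FT: "F \<subseteq> T" unfolding F_eq by (rule supC_sub)
  have Fctrl: "controllable Suc' F W" unfolding F_eq by (rule supC_ctrl)
  have Fcases: "\<And>t. t \<in> F \<Longrightarrow> length t \<le> N \<and> (s @ t \<in> K \<or> (length t = N \<and> s @ t \<in> P))"
  proof -
    fix t assume "t \<in> F"
    then have "t \<in> T" using FT by blast
    then show "length t \<le> N \<and> (s @ t \<in> K \<or> (length t = N \<and> s @ t \<in> P))"
      using N_ge unfolding T_def trunc_def quot_def P_def by auto
  qed
  have preF_P: "\<And>t. t \<in> pre F \<Longrightarrow> s @ t \<in> P"
  proof -
    fix t assume "t \<in> pre F"
    then obtain w where w: "t @ w \<in> F" unfolding pre_def by blast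
    then have "(s @ t) @ w \<in> P" using Fcases[OF w] KP by auto
    then show "s @ t \<in> P" by (rule Ppc)
  qed
  have preF_len: "\<And>t. t \<in> pre F \<Longrightarrow> length t \<le> N"
  proof -
    fix t assume "t \<in> pre F"
    then obtain w where w: "t @ w \<in> F" unfolding pre_def by blast
    then show "length t \<le> N" using Fcases[OF w] by simp
  qed
  have preF_pc: "\<And>t w. t @ w \<in> pre F \<Longrightarrow> t \<in> pre F" by (rule pre_app)
  have takepc: "\<And>a b. take N (a @ b) \<in> pre F \<Longrightarrow> take N a \<in> pre F"
  proof -
    fix a b assume "take N (a @ b) \<in> pre F"
    then have "take N a @ take (N - length a) b \<in> pre F" by simp
    then show "take N a \<in> pre F" by (rule preF_pc)
  qed
  have preF_unc: "\<And>t u. t \<in> pre F \<Longrightarrow> u \<in> Suc' \<Longrightarrow> s @ t @ [u] \<in> LG \<Longrightarrow> length t < N \<Longrightarrow> t @ [u] \<in> pre F"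
  proof -
    fix t u assume a: "t \<in> pre F" "u \<in> Suc'" "s @ t @ [u] \<in> LG" "length t < N"
    have "t @ [u] \<in> W" unfolding W_def trunc_def quot_def using a by simp
    then show "t @ [u] \<in> pre F" by (rule ctrlD[OF Fctrl a(1) a(2)])
  qed
  have noKfc_short: "\<And>t. t \<in> pre F \<Longrightarrow> length t < N \<Longrightarrow> s @ t \<notin> K_fc Suc' LG K"
  proof
    fix t assume a: "t \<in> pre F" "length t < N" "s @ t \<in> K_fc Suc' LG K"
    then obtain u where u: "u \<in> Suc'" "s @ t @ [u] \<in> LG" "s @ t @ [u] \<notin> P"
      unfolding K_fc_def P_def by auto
    have "t @ [u] \<in> pre F" by (rule preF_unc[OF a(1) u(1) u(2) a(2)])
    then have "s @ t @ [u] \<in> P" using preF_P by fastforce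
    then show False using u(3) by blast
  qed
  have Nfin: "finite (Nmcf_set Suc' LG K)" and Nmax: "n = Max (Nmcf_set Suc' LG K)"
    using defined unfolding Nmcf_def by (auto split: if_splits)
  have Nbound: "\<And>m. m \<in> Nmcf_set Suc' LG K \<Longrightarrow> m \<le> n" using Nfin Nmax by simp
  define noMC where "noMC t \<longleftrightarrow> (\<forall>t' w. t' \<noteq> [] \<and> w \<noteq> [] \<and> t = t' @ w \<longrightarrow> s @ t' \<notin> K_mc Suc' LG K)" for t
  have Kfc_lemma: "\<And>t. take N t \<in> pre F \<Longrightarrow> noMC t \<Longrightarrow> s @ t \<notin> K_fc Suc' LG K"
  proof
    fix t assume tF: "take N t \<in> pre F" and nm: "noMC t" and fc: "s @ t \<in> K_fc Suc' LG K"
    define x where "x = s @ t"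
    have tne: "t \<noteq> []" using fc RKfc sR' by auto
    define A where "A = {i. i \<le> length s \<and> take i s \<in> K_mc Suc' LG K \<union> {[]}}"
    have A0: "0 \<in> A" unfolding A_def by simp
    have finA: "finite A" unfolding A_def by auto
    define ia where "ia = Max A"
    have iaA: "ia \<in> A" unfolding ia_def using finA A0 Max_in by blast
    have ia_le: "ia \<le> length s" using iaA A_def by simp
    have ia_max: "\<And>i. ia < i \<Longrightarrow> i \<le> length s \<Longrightarrow> take i s \<notin> K_mc Suc' LG K"
    proof
      fix i assume "ia < i" "i \<le> length s" "take i s \<in> K_mc Suc' LG K"
      then have "i \<in> A" unfolding A_def by simp
      then have "i \<le> ia" unfolding ia_def using finA by simp
      then show False using \<open>ia < i\<close> by simp
    qed
    define B where "B = {j. ia < j \<and> j \<le> length x \<and> take j x \<in> K_fc Suc' LG K}"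
    have lB: "length x \<in> B" proof -
      have "length t > 0" using tne by simp
      then have "ia < length s + length t" using ia_le by linarith
      then show ?thesis unfolding B_def x_def using fc by simp
    qed
    have finB: "finite B" unfolding B_def by auto
    define jq where "jq = Min B"
    have jqB: "jq \<in> B" unfolding jq_def using finB lB Min_in by blast
    have jq_min: "\<And>j. ia < j \<Longrightarrow> j < jq \<Longrightarrow> j \<le> length x \<Longrightarrow> take j x \<notin> K_fc Suc' LG K"
    proof
      fix j assume "ia < j" "j < jq" "j \<le> length x" "take j x \<in> K_fc Suc' LG K"
      then have "j \<in> B" unfolding B_def by simp
      then have "jq \<le> j" unfolding jq_def using finB by simp
      then show False using \<open>j < jq\<close> by simp
    qed
    have jq1: "ia < jq" "jq \<le> length x" "take jq x \<in> K_fc Suc' LG K" using jqB B_def by auto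
    define a where "a = take ia s"
    define q where "q = drop ia (take jq x)"
    have ax: "take ia x = a" unfolding a_def x_def using ia_le by simp
    have aq: "a @ q = take jq x"
    proof -
      have "take ia (take jq x) = a" using ax jq1(1) by (simp add: min_def)
      then show ?thesis unfolding q_def by (metis append_take_drop_id)
    qed
    have lq: "length q = jq - ia" unfolding q_def using jq1 by simp
    have aA: "a \<in> K_mc Suc' LG K \<union> {[]}" using iaA unfolding A_def a_def by simp
    have qin: "length q \<in> Nmcf_set Suc' LG K"
      unfolding Nmcf_set_def
    proof (intro CollectI exI conjI allI impI)
      show "length q = length q" ..
      show "a \<in> K_mc Suc' LG K \<union> {[]}" by (rule aA)
      show "a @ q \<in> K_fc Suc' LG K" using aq jq1(3) by simp
      fix v w assume h: "v \<noteq> [] \<and> w \<noteq> [] \<and> q = v @ w"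
      define i where "i = ia + length v"
      have iv: "ia < i" using h i_def by simp
      have "length q = length v + length w" using h by simp
      then have ijq: "i < jq" using h lq i_def by (cases w) auto
      have avx: "a @ v = take i x"
      proof -
        have la: "length a = ia" unfolding a_def using ia_le by simp
        have "take (length a + length v) (a @ (v @ w)) = a @ v" by simp
        then have "take i (a @ q) = a @ v" using h la unfolding i_def by simp
        then show ?thesis using aq ijq by simp
      qed
      have nfc: "a @ v \<notin> K_fc Suc' LG K" using jq_min[OF iv ijq] jq1(2) ijq avx by simp
      have nmc: "a @ v \<notin> K_mc Suc' LG K"
      proof (cases "i \<le> length s")
        case True
        then have "take i x = take i s" unfolding x_def by simp
        then show ?thesis using ia_max[OF iv True] avx by simp
      next
        case False
        define t' where "t' = take (i - length s) t"
        have "take i x = s @ t'" unfolding x_def t'_def using False by simp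
        moreover have "t' \<noteq> []" unfolding t'_def using False tne by simp
        moreover have "drop (i - length s) t \<noteq> []" using ijq jq1(2) False unfolding x_def by simp
        moreover have "t = t' @ drop (i - length s) t" unfolding t'_def by simp
        ultimately show ?thesis using nm avx unfolding noMC_def by metis
      qed
      show "a @ v \<notin> K_fc Suc' LG K \<union> K_mc Suc' LG K" using nfc nmc by simp
    qed
    have "length q \<le> n" using Nbound[OF qin] .
    moreover have "jq \<ge> length s + N"
    proof (rule ccontr)
      assume "\<not> jq \<ge> length s + N"
      then have jl: "jq < length s + N" by simp
      show False
      proof (cases "jq \<le> length s")
        case True
        then have "take jq x = take jq s" unfolding x_def by simp
        moreover have "take jq s \<in> R" using sR' Rpc[of "take jq s" "drop jq s"] by simp
        ultimately show False using RKfc jq1(3) by simp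
      next
        case False
        define j' where "j' = jq - length s"
        have tj: "take jq x = s @ take j' t" unfolding x_def j'_def using False by simp
        have j'N: "j' < N" using jl False j'_def by simp
        have "take N t = take j' t @ drop j' (take N t)" using j'N
          by (metis append_take_drop_id min.strict_order_iff take_take)
        then have "take j' t \<in> pre F" using tF preF_pc by metis
        moreover have "length (take j' t) < N" using j'N by simp
        ultimately have "s @ take j' t \<notin> K_fc Suc' LG K" by (rule noKfc_short)
        then show False using tj jq1(3) by simp
      qed
    qed
    ultimately show False using lq ia_le N_ge by simp
  qed
  define Z where "Z = {s @ t | t. take N t \<in> pre F \<and> s @ t \<in> P \<and> noMC t}"
  define Q where "Q = R \<union> Z"
  have Qpc: "\<And>x y. x @ y \<in> Q \<Longrightarrow> x \<in> Q"
  proof -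
    fix x y assume xy: "x @ y \<in> Q"
    show "x \<in> Q"
    proof (cases "x @ y \<in> R")
      case True then show ?thesis using Rpc[OF True] Q_def by blast
    next
      case False
      then obtain t where t: "x @ y = s @ t" "take N t \<in> pre F" "s @ t \<in> P" "noMC t"
        using xy unfolding Q_def Z_def by blast
      show ?thesis
      proof (cases "length x \<le> length s")
        case True
        have "take (length x) (x @ y) = take (length x) (s @ t)" using t(1) by simp
        then have "x = take (length x) s" using True by simp
        then obtain us where "s = x @ us" by (metis append_take_drop_id)
        then have "x @ us \<in> R" using sR' by simp
        then show ?thesis using Rpc Q_def by blast
      next
        case False
        then obtain us where us: "x = s @ us" "t = us @ y"
          using t(1) append_eq_append_conv_if[of x y s t] by auto
        have "take N us \<in> pre F" using t(2) us(2) takepc by blast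
        moreover have "s @ us \<in> P" using t(3) us(2) Ppc[of "s @ us" y] by simp
        moreover have "noMC us" using t(4) us(2) unfolding noMC_def by auto
        ultimately show ?thesis unfolding Q_def Z_def using us(1) by blast
      qed
    qed
  qed
  have Quc: "\<And>x u. x \<in> Q \<Longrightarrow> u \<in> Suc' \<Longrightarrow> x @ [u] \<in> LG \<Longrightarrow> x @ [u] \<in> Q"
  proof -
    fix x u assume a: "x \<in> Q" "u \<in> Suc'" "x @ [u] \<in> LG"
    show "x @ [u] \<in> Q"
    proof (cases "x \<in> R")
      case True then show ?thesis using Rctrl[OF True a(2) a(3)] Q_def by blast
    next
      case False
      then obtain t where t: "x = s @ t" "take N t \<in> pre F" "s @ t \<in> P" "noMC t"
        using a(1) unfolding Q_def Z_def by blast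
      have tne: "t \<noteq> []" using t(1) False sR' by auto
      have notmc: "s @ t \<notin> K_mc Suc' LG K"
        using a t(1) unfolding K_mc_def Lc_def by auto
      have nm: "noMC (t @ [u])"
        unfolding noMC_def
      proof (intro allI impI)
        fix t' w assume h: "t' \<noteq> [] \<and> w \<noteq> [] \<and> t @ [u] = t' @ w"
        show "s @ t' \<notin> K_mc Suc' LG K"
        proof (cases "t' = t")
          case True then show ?thesis using notmc by simp
        next
          case False
          obtain w' z where wz: "w = w' @ [z]" using h by (metis rev_exhaust)
          then have "t = t' @ w'" using h by simp
          moreover have "w' \<noteq> []" using False \<open>t = t' @ w'\<close> by auto
          ultimately show ?thesis using t(4) h unfolding noMC_def by blast
        qed
      qed
      show ?thesis
      proof (cases "length t < N")
        case True
        then have tF: "t \<in> pre F" using t(2) by simp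
        have "t @ [u] \<in> pre F" using preF_unc[OF tF a(2)] a(3) t(1) True by simp
        moreover have "take N (t @ [u]) = t @ [u]" using True by simp
        ultimately have "s @ t @ [u] \<in> P" "take N (t @ [u]) \<in> pre F" using preF_P by auto
        then show ?thesis unfolding Q_def Z_def using nm t(1) by auto
      next
        case False
        have "s @ t \<notin> K_fc Suc' LG K" using Kfc_lemma t(2) t(4) by blast
        then have "s @ t @ [u] \<in> P" using t(3) a t(1) unfolding K_fc_def P_def by auto
        moreover have "take N (t @ [u]) = take N t" using False by simp
        ultimately show ?thesis unfolding Q_def Z_def using nm t by auto
      qed
    qed
  qed
  have ext: "\<And>t. take N t \<in> pre F \<Longrightarrow> s @ t \<in> P \<Longrightarrow> \<exists>w. s @ t @ w \<in> K \<and> take N (t @ w) \<in> pre F"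
  proof -
    fix t assume a: "take N t \<in> pre F" "s @ t \<in> P"
    show "\<exists>w. s @ t @ w \<in> K \<and> take N (t @ w) \<in> pre F"
    proof (cases "length t < N")
      case False
      obtain w where "(s @ t) @ w \<in> K" using a(2) unfolding P_def pre_def by blast
      moreover have "take N (t @ w) = take N t" using False by simp
      ultimately show ?thesis using a(1) by auto
    next
      case True
      then have "t \<in> pre F" using a(1) by simp
      then obtain w' where w': "t @ w' \<in> F" unfolding pre_def by blast
      have tw'pre: "t @ w' \<in> pre F" using w' pre_sub by blast
      have c: "length (t @ w') \<le> N" "s @ t @ w' \<in> K \<or> (length (t @ w') = N \<and> s @ t @ w' \<in> P)"
        using Fcases[OF w'] by auto
      show ?thesis
      proof (cases "s @ t @ w' \<in> K")
        case True
        moreover have "take N (t @ w') = t @ w'" using c(1) by simp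
        ultimately show ?thesis using tw'pre by metis
      next
        case False
        then have l: "length (t @ w') = N" and "s @ t @ w' \<in> P" using c by auto
        then obtain w'' where "(s @ t @ w') @ w'' \<in> K" unfolding P_def pre_def by blast
        moreover have "take N (t @ w' @ w'') = t @ w'" using l
          by (metis append_assoc append_eq_conv_conj)
        ultimately show ?thesis using tw'pre by (metis append_assoc)
      qed
    qed
  qed
  have Qex: "Q \<subseteq> pre (Q \<inter> K)"
  proof
    fix x assume xQ: "x \<in> Q"
    show "x \<in> pre (Q \<inter> K)"
    proof (cases "x \<in> R")
      case True
      then obtain w where w: "x @ w \<in> supC Suc' K LG" unfolding R_def pre_def by blast
      then have "x @ w \<in> R" unfolding R_def using pre_sub by blast
      moreover have "x @ w \<in> K" using w supC_sub by blast
      ultimately show ?thesis unfolding pre_def Q_def by blast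
    next
      case False
      then obtain t where t: "x = s @ t" "take N t \<in> pre F" "s @ t \<in> P" "noMC t"
        using xQ unfolding Q_def Z_def by blast
      obtain w where w: "s @ t @ w \<in> K" "take N (t @ w) \<in> pre F" using ext[OF t(2,3)] by blast
      define C where "C = {i. i \<le> length w \<and> (s @ t @ take i w \<in> K_mc Suc' LG K \<or> i = length w)}"
      have lC: "length w \<in> C" unfolding C_def by simp
      define i0 where "i0 = Min C"
      have finC: "finite C" unfolding C_def by auto
      have i0C: "i0 \<in> C" unfolding i0_def using finC lC Min_in by blast
      have i0min: "\<And>j. j < i0 \<Longrightarrow> j \<notin> C" unfolding i0_def using finC Min_le by fastforce
      have i0le: "i0 \<le> length w" using i0C C_def by simp
      define v where "v = take i0 w"
      have lv: "length v = i0" unfolding v_def using i0le by simp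
      have vK: "s @ t @ v \<in> K"
        using i0C w(1) unfolding C_def v_def K_mc_def by auto
      have vF: "take N (t @ v) \<in> pre F"
      proof -
        have "take N ((t @ v) @ drop i0 w) \<in> pre F" using w(2) unfolding v_def by simp
        then show ?thesis by (rule takepc)
      qed
      have vP: "s @ t @ v \<in> P" using vK KP by blast
      have vnm: "noMC (t @ v)"
        unfolding noMC_def
      proof (intro allI impI)
        fix t' w' assume h: "t' \<noteq> [] \<and> w' \<noteq> [] \<and> t @ v = t' @ w'"
        show "s @ t' \<notin> K_mc Suc' LG K"
        proof (cases "length t \<le> length t'")
          case True
          have e: "t @ drop (length t) t' = t' \<and> v = drop (length t) t' @ w'"
            using h True append_eq_append_conv_if[of t v t' w'] by auto
          define us where "us = drop (length t) t'"
          have us: "t' = t @ us" "v = us @ w'" using e unfolding us_def by auto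
          have lus: "length us < i0" using us(2) h lv by (cases w') auto
          then have "length us \<notin> C" by (rule i0min)
          moreover have "take (length us) w = us"
            using us(2) lus unfolding v_def
            by (metis append_eq_conv_conj lv take_take min.strict_order_iff v_def)
          ultimately show ?thesis using us(1) i0le lus unfolding C_def by auto
        next
          case False
          have e: "t = t' @ drop (length t') t \<and> w' = drop (length t') t @ v"
            using h False append_eq_append_conv_if[of t v t' w'] by auto
          define us where "us = drop (length t') t"
          have us: "t = t' @ us" "w' = us @ v" using e unfolding us_def by auto
          have "us \<noteq> []" using us(1) False by auto
          then show ?thesis using t(4) us(1) h unfolding noMC_def by blast
        qed
      qed
      have "s @ t @ v \<in> Q \<inter> K" unfolding Q_def Z_def using vK vF vP vnm by auto
      then show ?thesis unfolding pre_def using t(1) by auto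
    qed
  qed
  have "Q \<subseteq> R" unfolding R_def by (rule region[OF Qpc Quc Qex])
  moreover have "s @ [\<sigma>] \<in> Z"
  proof -
    have N1: "N \<ge> 1" using N_ge by simp
    then have tk: "take N [\<sigma>] = [\<sigma>]" by (cases N) auto
    have "[\<sigma>] \<in> pre F" using sig F_def by simp
    moreover have "noMC [\<sigma>]" unfolding noMC_def by (auto simp: Cons_eq_append_conv)
    ultimately show ?thesis unfolding Z_def using tk preF_P by auto
  qed
  ultimately show ?thesis unfolding Q_def R_def by blast
qed

theorem theorem11:
  fixes Suc' :: "'a::finite set"
    and LG LmG K :: "'a list set"
    and N n :: nat
  assumes plant: "LG = pre LmG"
    and K_sub: "K \<subseteq> LmG"
    and K_closed: "K = pre K \<inter> LmG"
    and nonempty: "supC Suc' K LG \<noteq> {}"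
    and defined: "Nmcf Suc' LG K = Some n"
    and N_ge: "N \<ge> n + 1"
  shows "closed_loop LG (gamma_optm Suc' LG K N) = pre (supC Suc' K LG)"
proof
  show "closed_loop LG (gamma_optm Suc' LG K N) \<subseteq> pre (supC Suc' K LG)"
  proof
    fix x assume "x \<in> closed_loop LG (gamma_optm Suc' LG K N)"
    then show "x \<in> pre (supC Suc' K LG)"
    proof (induction rule: closed_loop.induct)
      case eps
      from nonempty obtain y where "y \<in> supC Suc' K LG" by blast
      then show ?case unfolding pre_def by auto
    next
      case (step s \<sigma>)
      show ?case
      proof (cases "\<sigma> \<in> Suc'")
        case True then show ?thesis by (rule ctrlD[OF supC_ctrl step.IH _ step.hyps(2)])
      next
        case False
        then have "[\<sigma>] \<in> pre (f_optm Suc' LG K N s)" using step.hyps(3) unfolding gamma_optm_def by auto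
        then show ?thesis by (rule step_good[OF plant K_sub defined N_ge step.IH])
      qed
    qed
  qed
next
  show "pre (supC Suc' K LG) \<subseteq> closed_loop LG (gamma_optm Suc' LG K N)"
  proof
    fix x assume "x \<in> pre (supC Suc' K LG)"
    then show "x \<in> closed_loop LG (gamma_optm Suc' LG K N)"
    proof (induction x rule: rev_induct)
      case Nil show ?case by (rule closed_loop.eps)
    next
      case (snoc \<sigma> s)
      have s1: "s \<in> pre (supC Suc' K LG)" using snoc.prems by (rule pre_app)
      have "pre (supC Suc' K LG) \<subseteq> LG" unfolding plant
        using pre_mono[OF supC_sub] pre_mono[OF K_sub] by blast
      then have s2: "s @ [\<sigma>] \<in> LG" using snoc.prems by blast
      have "N \<ge> 1" using N_ge by simp
      then have "[\<sigma>] \<in> pre (f_optm Suc' LG K N s)" using snoc.prems by (rule step_in)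
      then have "\<sigma> \<in> gamma_optm Suc' LG K N s" unfolding gamma_optm_def by blast
      then show ?case by (rule closed_loop.step[OF snoc.IH[OF s1] s2])
    qed
  qed
qed

end
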